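(* Let $Q=\langle b\rangle\ltimes_{(g,\gamma)}X$. For all $i,j,k\in\mathbb Z$ and $x,y,z\in X$, $$[(b^i,x),(b^j,y),(b^k,z)]=\Big(1,\ \Sigma_{I(i+j,i+j+k)}(x,y)+\Sigma_{I(i+k,i+j+k)}(x,z)+\Sigma_{I(j+k,i+j+k)}(y,z)\Big).$$
   Context: Let $(X,+)$ be an abelian group and $(g,\gamma)$ a construction pair on it: $g$ a permutation of $X$, $\gamma:X\times X\to X$ symmetric, alternating, biadditive, with (C1) $g^{-1}(g(x)+g(y))=x+y+\gamma(x,y)+g^{-1}(\gamma(x,y))+g^{-2}(\gamma(x,y))$, (C2) $\gamma(\gamma(x,y),z)=0$, (C3) $g^{-1}(\gamma(x,y))=\gamma(g(x),y)$ for all $x,y,z$. Let $\mathrm{Rad}(\gamma)=\{x:\gamma(x,y)=0\ \forall y\}$ and $r(g,\gamma)$ the least positive $r$ with $\sum_{0\le k<r}g^k(x)\in\mathrm{Rad}(\gamma)$ for all $x$ ($\infty$ if none). $I(i,j)$ is $\emptyset$ if $i=j$, $\{i,\dots,j-1\}$ if $i<j$, $\{j,\dots,i-1\}$ if $j<i$. For $U\subseteq\mathbb Z$, $\Sigma_U(x,y)=\sum_{k\in U}g^{-k}(\gamma(x,y))$. For a cyclic group $C=\langle b\rangle$ such that (if finite) $|g|$ and $r(g,\gamma)$ divide $|C|$, $C\ltimes_{(g,\gamma)}X$ is the Moufang loop on $C\times X$ with multiplication $(b^i,x)(b^j,y)=(b^{i+j},g^{-j}(x)+y+\Sigma_{I(i+j,-j)}(x,y))$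 and neutral element $(1,0)$. The associator $[u,v,w]$ in a loop is defined by $(u\cdot vw)[u,v,w]=uv\cdot w$. *)

theory Defs
  imports Main
begin

definition gpow :: "('a \<Rightarrow> 'a) \<Rightarrow> int \<Rightarrow> 'a \<Rightarrow> 'a" where
  "gpow g k = (if 0 \<le> k then g ^^ nat k else (inv g) ^^ nat (- k))"

definition construction_pair :: "('a::ab_group_add \<Rightarrow> 'a) \<Rightarrow> ('a \<Rightarrow> 'a \<Rightarrow> 'a) \<Rightarrow> bool" where
  "construction_pair g \<gamma> \<longleftrightarrow>
     bij g \<and>
     (\<forall>x y. \<gamma> x y = \<gamma> y x) \<and>
     (\<forall>x. \<gamma> x x = 0) \<and>
     (\<forall>x y z. \<gamma> (x + y) z = \<gamma> x z + \<gamma> y z) \<and>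
     (\<forall>x y z. \<gamma> x (y + z) = \<gamma> x y + \<gamma> x z) \<and>
     (\<forall>x y. gpow g (-1) (g x + g y)
        = x + y + \<gamma> x y + gpow g (-1) (\<gamma> x y) + gpow g (-2) (\<gamma> x y)) \<and>
     (\<forall>x y z. \<gamma> (\<gamma> x y) z = 0) \<and>
     (\<forall>x y. gpow g (-1) (\<gamma> x y) = \<gamma> (g x) y)"

definition Rad :: "('a \<Rightarrow> 'a \<Rightarrow> 'a::zero) \<Rightarrow> 'a set" where
  "Rad \<gamma> = {x. \<forall>y. \<gamma> x y = 0}"

text \<open>r(g,gamma); the value 0 encodes \<infinity>.\<close>
definition rpar :: "('a::comm_monoid_add \<Rightarrow> 'a) \<Rightarrow> ('a \<Rightarrow> 'a \<Rightarrow> 'a) \<Rightarrow> nat" where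
  "rpar g \<gamma> = (if \<exists>r>0. \<forall>x. (\<Sum>k<r. (g ^^ k) x) \<in> Rad \<gamma>
                then LEAST r. r > 0 \<and> (\<forall>x. (\<Sum>k<r. (g ^^ k) x) \<in> Rad \<gamma>) else 0)"

text \<open>Order |g| of the permutation g; the value 0 encodes \<infinity>.\<close>
definition perm_order :: "('a \<Rightarrow> 'a) \<Rightarrow> nat" where
  "perm_order g = (if \<exists>m>0. g ^^ m = id then LEAST m. m > 0 \<and> g ^^ m = id else 0)"

definition Iset :: "int \<Rightarrow> int \<Rightarrow> int set" where
  "Iset i j = (if i = j then {} else if i < j then {i..j-1} else {j..i-1})"

definition Sig :: "('a::comm_monoid_add \<Rightarrow> 'a) \<Rightarrow> ('a \<Rightarrow> 'a \<Rightarrow> 'a) \<Rightarrow> int set \<Rightarrow> 'a \<Rightarrow> 'a \<Rightarrow> 'a" where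
  "Sig g \<gamma> U x y = (\<Sum>k\<in>U. gpow g (- k) (\<gamma> x y))"

text \<open>The cyclic group C = <b> of order n (n = 0 meaning infinite) is modelled as
  Z/nZ with canonical representatives (i mod n; for n = 0 this is i itself).
  The element (b^i, x) of C \<ltimes> X is the pair (i mod n, x).\<close>
definition sd_carrier :: "nat \<Rightarrow> (int \<times> 'a) set" where
  "sd_carrier n = {(i, x). i mod int n = i}"

definition sd_elem :: "nat \<Rightarrow> int \<Rightarrow> 'a \<Rightarrow> int \<times> 'a" where
  "sd_elem n i x = (i mod int n, x)"

definition sd_mult :: "nat \<Rightarrow> ('a::ab_group_add \<Rightarrow> 'a) \<Rightarrow> ('a \<Rightarrow> 'a \<Rightarrow> 'a)
     \<Rightarrow> int \<times> 'a \<Rightarrow> int \<times> 'a \<Rightarrow> int \<times> 'a" where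
  "sd_mult n g \<gamma> u v = (case u of (i, x) \<Rightarrow> case v of (j, y) \<Rightarrow>
      ((i + j) mod int n, gpow g (- j) x + y + Sig g \<gamma> (Iset (i + j) (- j)) x y))"

definition sd_assoc :: "nat \<Rightarrow> ('a::ab_group_add \<Rightarrow> 'a) \<Rightarrow> ('a \<Rightarrow> 'a \<Rightarrow> 'a)
     \<Rightarrow> int \<times> 'a \<Rightarrow> int \<times> 'a \<Rightarrow> int \<times> 'a \<Rightarrow> int \<times> 'a" where
  "sd_assoc n g \<gamma> u v w = (THE a. a \<in> sd_carrier n \<and>
      sd_mult n g \<gamma> (sd_mult n g \<gamma> u (sd_mult n g \<gamma> v w)) a
        = sd_mult n g \<gamma> (sd_mult n g \<gamma> u v) w)"

end

theory Submission imports Defs begin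

lemma gpow_succ: assumes "bij g" shows "gpow g (k+1) x = g (gpow g k x)"
proof (cases "0 \<le> k")
  case True
  then have "nat (k+1) = Suc (nat k)" by simp
  then show ?thesis using True by (simp add: gpow_def)
next
  case False
  then have k: "nat (-k) = Suc (nat (-(k+1)))" by simp
  have gi: "g (inv g y) = y" for y using assms by (simp add: bij_def surj_f_inv_f)
  show ?thesis
  proof (cases "k = -1")
    case True then show ?thesis using gi by (simp add: gpow_def)
  next
    case False2: False
    then have "\<not> 0 \<le> k+1" using False by simp
    then show ?thesis using False k gi by (simp add: gpow_def)
  qed
qed

lemma gpow_pred: assumes "bij g" shows "gpow g (k-1) x = inv g (gpow g k x)"
proof -
  have "gpow g k x = g (gpow g (k-1) x)" using gpow_succ[OF assms, of "k-1"] by simp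
  then show ?thesis using assms by (simp add: bij_def inv_f_f)
qed

lemma gpow_0[simp]: "gpow g 0 x = x" by (simp add: gpow_def)

lemma gpow_add: assumes "bij g" shows "gpow g (a+b) x = gpow g a (gpow g b x)"
proof (induction a rule: int_induct[where k=0])
  case base then show ?case by simp
next
  case (step1 i) then show ?case using gpow_succ[OF assms, of "i+b"] gpow_succ[OF assms, of i]
    by (simp add: add.commute add.left_commute)
next
  case (step2 i) then show ?case using gpow_pred[OF assms, of "i+b"] gpow_pred[OF assms, of i]
    by (simp add: algebra_simps)
qed

lemma gpow_1: "gpow g 1 = g" by (simp add: gpow_def fun_eq_iff)
lemma gpow_m1: "gpow g (-1) = inv g" by (simp add: gpow_def fun_eq_iff)
lemma gpow_nat: "gpow g (int m) = g ^^ m" by (simp add: gpow_def)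

locale cp =
  fixes g :: "'a::ab_group_add \<Rightarrow> 'a" and \<gamma> :: "'a \<Rightarrow> 'a \<Rightarrow> 'a"
  assumes CP: "construction_pair g \<gamma>"
begin

lemma bij: "bij g" using CP by (simp add: construction_pair_def)
lemma gsym: "\<gamma> x y = \<gamma> y x" using CP by (simp add: construction_pair_def)
lemma galt: "\<gamma> x x = 0" using CP by (simp add: construction_pair_def)
lemma addL: "\<gamma> (x + y) z = \<gamma> x z + \<gamma> y z" using CP by (simp add: construction_pair_def)
lemma addR: "\<gamma> x (y + z) = \<gamma> x y + \<gamma> x z" using CP by (simp add: construction_pair_def)
lemma C1: "inv g (g x + g y) = x + y + \<gamma> x y + inv g (\<gamma> x y) + inv g (inv g (\<gamma> x y))"
proof -
  have "gpow g (-2) z = inv g (inv g z)" for z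
    using gpow_add[OF bij, of "-1" "-1" z] by (simp add: gpow_m1)
  then show ?thesis using CP by (simp add: construction_pair_def gpow_m1)
qed
lemma C2: "\<gamma> (\<gamma> x y) z = 0" using CP unfolding construction_pair_def by blast
lemma C3: "inv g (\<gamma> x y) = \<gamma> (g x) y" using CP by (simp add: construction_pair_def gpow_m1)

lemma gi[simp]: "g (inv g y) = y" using bij by (simp add: bij_def surj_f_inv_f)
lemma ig[simp]: "inv g (g y) = y" using bij by (simp add: bij_def inv_f_f)
lemma inj_ig: "inv g a = inv g b \<Longrightarrow> a = b" by (metis gi)

lemma g0R[simp]: "\<gamma> x 0 = 0" using addR[of x 0 0] by simp
lemma g0L[simp]: "\<gamma> 0 x = 0" using addL[of 0 0 x] by simp
lemma h0[simp]: "inv g 0 = 0" using C3[of 0 0] by simp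
lemma g0[simp]: "g 0 = 0" using gi[of 0] by simp
lemma two: "\<gamma> x y + \<gamma> x y = 0"
proof -
  have "0 = \<gamma> (x+y) (x+y)" using galt by simp
  also have "\<dots> = \<gamma> x x + \<gamma> y x + (\<gamma> x y + \<gamma> y y)" by (simp add: addL addR)
  finally show ?thesis using galt[of x] galt[of y] gsym[of y x] by simp
qed

lemma K: "gpow g (-m) (\<gamma> x y) = \<gamma> (gpow g m x) y"
proof (induction m rule: int_induct[where k=0])
  case base then show ?case by simp
next
  case (step1 i)
  have "gpow g (-(i+1)) (\<gamma> x y) = inv g (gpow g (-i) (\<gamma> x y))"
    using gpow_pred[OF bij, of "-i"] by simp
  also have "\<dots> = \<gamma> (gpow g (i+1) x) y" using step1 C3 gpow_succ[OF bij] by simp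
  finally show ?case .
next
  case (step2 i)
  have "gpow g (-(i-1)) (\<gamma> x y) = g (gpow g (-i) (\<gamma> x y))"
    using gpow_succ[OF bij, of "-i"] by simp
  also have "\<dots> = g (inv g (\<gamma> (gpow g (i-1) x) y))"
    using step2 C3 gpow_succ[OF bij, of "i-1" x] by simp
  finally show ?case by simp
qed

lemma Kt: "gpow g t (\<gamma> x y) = \<gamma> (gpow g (-t) x) y"
  using K[of "-t"] by simp

lemma swap: "\<gamma> (gpow g a x) y = \<gamma> x (gpow g a y)"
  using K[of a x y] K[of a y x] gsym by metis

definition inRad where "inRad r \<longleftrightarrow> (\<forall>y. \<gamma> r y = 0)"

lemma RadD: "inRad r \<Longrightarrow> \<gamma> r y = 0" by (simp add: inRad_def)
lemma RadD2: "inRad r \<Longrightarrow> \<gamma> y r = 0" by (simp add: inRad_def gsym[of y])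
lemma Rad_add: "inRad a \<Longrightarrow> inRad b \<Longrightarrow> inRad (a + b)" by (simp add: inRad_def addL)
lemma Rad_gamma: "inRad (\<gamma> x y)" by (simp add: inRad_def C2)
lemma Rad_0: "inRad 0" by (simp add: inRad_def)
lemma Rad_sum: "(\<And>m. m \<in> U \<Longrightarrow> inRad (f m)) \<Longrightarrow> inRad (sum f U)"
  by (induction U rule: infinite_finite_induct) (auto intro: Rad_add Rad_0)
lemma Rad_g: "inRad r \<Longrightarrow> inRad (g r)"
  using C3[of r] by (simp add: inRad_def)
lemma Rad_h: "inRad r \<Longrightarrow> inRad (inv g r)"
  unfolding inRad_def by (metis C3 gi h0 inj_ig)
lemma Rad_gpow: "inRad r \<Longrightarrow> inRad (gpow g t r)"
proof (induction t rule: int_induct[where k=0])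
  case base then show ?case by simp
next
  case (step1 i) then show ?case using gpow_succ[OF bij] Rad_g by simp
next
  case (step2 i) then show ?case using gpow_pred[OF bij] Rad_h by simp
qed

lemma h_addR: "inRad r \<Longrightarrow> inv g (A + r) = inv g A + inv g r"
  using C1[of "inv g A" "inv g r"] Rad_h[of r] by (simp add: RadD2)
lemma g_addR: "inRad r \<Longrightarrow> g (A + r) = g A + g r"
  using h_addR[of "g r" "g A"] Rad_g[of r] by (metis gi ig)
lemma gpow_addR: "inRad r \<Longrightarrow> gpow g t (A + r) = gpow g t A + gpow g t r"
proof (induction t arbitrary: A r rule: int_induct[where k=0])
  case base then show ?case by simp
next
  case (step1 i) then show ?case using gpow_succ[OF bij] g_addR Rad_gpow by simp
next
  case (step2 i) then show ?case using gpow_pred[OF bij] h_addR Rad_gpow by simp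
qed
lemma gpow_zero[simp]: "gpow g t 0 = 0"
  using gpow_addR[OF Rad_0, of t 0] by simp
lemma gpow_sum: "(\<And>m. m \<in> U \<Longrightarrow> inRad (f m)) \<Longrightarrow> gpow g t (sum f U) = (\<Sum>m\<in>U. gpow g t (f m))"
proof (induction U rule: infinite_finite_induct)
  case (insert x F) then show ?case using gpow_addR[of "sum f F" t "f x"] Rad_sum[of F f]
    by (simp add: add.commute)
qed auto


lemma Iset_sym: "Iset a b = Iset b a" by (simp add: Iset_def)
lemma Iset_same[simp]: "Iset a a = {}" by (simp add: Iset_def)
lemma Iset_fin[simp]: "finite (Iset a b)" by (simp add: Iset_def)
lemma Iset_single: "Iset c (c+1) = {c}" by (simp add: Iset_def)
lemma Iset_split: "a \<le> b \<Longrightarrow> b \<le> c \<Longrightarrow> Iset a c = Iset a b \<union> Iset b c \<and> Iset a b \<inter> Iset b c = {}"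
  by (auto simp: Iset_def)

definition D where "D p q a b = (\<Sum>m\<in>Iset a b. \<gamma> (gpow g m p) q)"

lemma Sig_D: "Sig g \<gamma> (Iset a b) x y = D x y a b"
  unfolding Sig_def D_def using K by simp

lemma D_reindex: "D p q (a+s) (b+s) = (\<Sum>m\<in>Iset a b. \<gamma> (gpow g (m+s) p) q)"
  unfolding D_def
  by (rule sum.reindex_bij_witness[of _ "\<lambda>m. m + s" "\<lambda>m. m - s"]) (auto simp: Iset_def)

lemma D_Rad: "inRad (D p q a b)" unfolding D_def by (rule Rad_sum) (rule Rad_gamma)
lemma D_two: "D p q a b + D p q a b = 0"
  unfolding D_def sum.distrib[symmetric] by (simp add: two)
lemma D_neg: "- D p q a b = D p q a b" using D_two by (simp add: add_eq_0_iff)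
lemma gswap2: "\<gamma> (gpow g m p) q = \<gamma> (gpow g m q) p"
  by (metis swap gsym)
lemma D_symp: "D p q a b = D q p a b" unfolding D_def
  by (simp only: gswap2)
lemma D_addR: "D p (u+v) a b = D p u a b + D p v a b"
  unfolding D_def by (simp add: addR sum.distrib)
lemma D_addL: "D (u+v) p a b = D u p a b + D v p a b"
  using D_addR D_symp by metis
lemma D_RadR: "inRad r \<Longrightarrow> D p r a b = 0"
  unfolding D_def by (simp add: RadD2)
lemma D_RadL: "inRad r \<Longrightarrow> D r p a b = 0"
  using D_RadR D_symp by metis
lemma D_shiftL: "D (gpow g s p) q a b = D p q (a+s) (b+s)"
  unfolding D_reindex unfolding D_def
  by (rule sum.cong) (auto simp: gpow_add[OF bij, symmetric] add.commute)
lemma D_shiftR: "D p (gpow g s q) a b = D p q (a+s) (b+s)"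
  using D_shiftL D_symp by metis
lemma gpow_D: "gpow g t (D p q a b) = D p q (a-t) (b-t)"
proof -
  have "gpow g t (D p q a b) = (\<Sum>m\<in>Iset a b. \<gamma> (gpow g (m-t) p) q)"
    unfolding D_def by (subst gpow_sum) (auto simp: Rad_gamma Kt gpow_add[OF bij, symmetric] add.commute)
  also have "\<dots> = D p q (a-t) (b-t)"
    using D_reindex[of p q a "-t" b] by simp
  finally show ?thesis .
qed
lemma D_same[simp]: "D p q a a = 0" by (simp add: D_def)
lemma D_sym: "D p q a b = D p q b a" by (simp add: D_def Iset_sym)
lemma D_split: "a \<le> b \<Longrightarrow> b \<le> c \<Longrightarrow> D p q a c = D p q a b + D p q b c"
  unfolding D_def using Iset_split[of a b c] by (simp add: sum.union_disjoint)

lemma D_cocycle: "D p q a b + D p q b c = D p q a c"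
proof -
  let ?D = "D p q"
  have t: "\<And>u v. ?D u v + ?D u v = 0" by (rule D_two)
  have s: "\<And>u v. ?D u v = ?D v u" by (rule D_sym)
  have sp: "\<And>u v w. u \<le> v \<Longrightarrow> v \<le> w \<Longrightarrow> ?D u w = ?D u v + ?D v w" by (rule D_split)
  consider "a \<le> b" "b \<le> c" | "a \<le> c" "c \<le> b" | "b \<le> a" "a \<le> c" | "b \<le> c" "c \<le> a"
    | "c \<le> a" "a \<le> b" | "c \<le> b" "b \<le> a" by linarith
  then show ?thesis
  proof cases
    case 1 then show ?thesis using sp[of a b c] by simp
  next
    case 2 then have e: "?D a b = ?D a c + ?D c b" by (rule sp)
    have "?D a b + ?D b c = ?D a c + (?D c b + ?D c b)" unfolding e s[of b c] by (simp only: add.assoc)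
    then show ?thesis by (simp only: t add_0_right)
  next
    case 3 then have e: "?D b c = ?D b a + ?D a c" by (rule sp)
    have "?D a b + ?D b c = (?D a b + ?D a b) + ?D a c" unfolding e s[of b a] by (simp only: add.assoc)
    then show ?thesis by (simp only: t add_0_left)
  next
    case 4 then have e: "?D b a = ?D b c + ?D c a" by (rule sp)
    have "?D a b + ?D b c = ?D c a + (?D b c + ?D b c)" unfolding s[of a b] e
      by (simp only: add.commute add.left_commute)
    then show ?thesis by (simp only: t add_0_right s[of c a])
  next
    case 5 then have e: "?D c b = ?D c a + ?D a b" by (rule sp)
    have "?D a b + ?D b c = ?D a c + (?D a b + ?D a b)" unfolding s[of b c] e s[of c a]
      by (simp only: add.commute add.left_commute)
    then show ?thesis by (simp only: t add_0_right)
  next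
    case 6 then have e: "?D c a = ?D c b + ?D b a" by (rule sp)
    show ?thesis unfolding s[of a c] e s[of c b] s[of b a] by (simp only: add.commute)
  qed
qed

definition G where "G p q a = D p q 0 a"
lemma D_G: "D p q a b = G p q a + G p q b"
  unfolding G_def using D_cocycle[of p q a 0 b] D_sym[of p q a 0] by simp
lemma G_neg[simp]: "- G p q a = G p q a" unfolding G_def by (rule D_neg)
lemma G_two[simp]: "G p q a + G p q a = 0" unfolding G_def by (rule D_two)
lemma G_cancel[simp]: "G p q a + (G p q a + w) = w" by (simp add: add.assoc[symmetric])


lemma A1: "inv g (p + q) = inv g p + inv g q + D p q (-2) 1"
proof -
  have I: "Iset (-2) 1 = {-2, -1, 0::int}" by (auto simp: Iset_def)
  have g2: "gpow g (-2) z = inv g (inv g z)" for z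
    using gpow_add[OF bij, of "-1" "-1" z] by (simp add: gpow_m1)
  let ?a = "inv g p" and ?b = "inv g q"
  have e1: "\<gamma> ?a ?b = \<gamma> (gpow g (-2) p) q"
    using swap[of "-1" ?a q] by (simp add: gpow_m1 g2)
  have e2: "inv g (\<gamma> ?a ?b) = \<gamma> (gpow g (-1) p) q"
    using C3[of ?a ?b] swap[of "-1" p q] by (simp add: gpow_m1)
  have e3: "inv g (inv g (\<gamma> ?a ?b)) = \<gamma> p q"
    using e2 C3[of ?a q] by (simp add: gpow_m1)
  have "inv g (p + q) = ?a + ?b + \<gamma> ?a ?b + inv g (\<gamma> ?a ?b) + inv g (inv g (\<gamma> ?a ?b))"
    using C1[of ?a ?b] by simp
  also have "\<dots> = ?a + ?b + D p q (-2) 1"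
    unfolding e3 unfolding e2 unfolding e1 D_def I by (simp add: add.assoc)
  finally show ?thesis .
qed

lemma STEP: "inv g (gpow g s p + gpow g s q + D p q (2*s) (-s))
   = gpow g (s-1) p + gpow g (s-1) q + D p q (2*(s-1)) (-(s-1))"
proof -
  have e0: "inv g (gpow g s p + gpow g s q + D p q (2*s) (-s))
     = inv g (gpow g s p + gpow g s q) + inv g (D p q (2*s) (-s))"
    by (rule h_addR[OF D_Rad])
  have e1: "inv g (D p q (2*s) (-s)) = D p q (2*s+1) (-(s-1))"
    using gpow_D[of "-1" p q "2*s" "-s"] by (simp add: gpow_m1)
  have i1: "inv g (gpow g s x) = gpow g (s-1) x" for x using gpow_pred[OF bij, of s x] by simp
  have e2: "D (gpow g s p) (gpow g s q) (-2) 1 = D p q (2*(s-1)) (2*s+1)"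
    using D_shiftL[of s p "gpow g s q" "-2" 1] D_shiftR[of p s q "-2+s" "1+s"]
    by (simp add: algebra_simps)
  have e3: "inv g (gpow g s p + gpow g s q) = gpow g (s-1) p + gpow g (s-1) q + D p q (2*(s-1)) (2*s+1)"
    using A1[of "gpow g s p" "gpow g s q"] unfolding i1 e2 .
  have e4: "D p q (2*(s-1)) (2*s+1) + D p q (2*s+1) (-(s-1)) = D p q (2*(s-1)) (-(s-1))"
    by (rule D_cocycle)
  show ?thesis unfolding e0 e1 e3 e4[symmetric] by (simp only: add.assoc)
qed

lemma NA: "gpow g t (p+q) = gpow g t p + gpow g t q + D p q (2*t) (-t)"
proof (induction t rule: int_induct[where k=0])
  case base then show ?case by simp
next
  case (step1 i)
  have a: "inv g (gpow g (i+1) x) = gpow g i x" for x using gpow_pred[OF bij, of "i+1" x] by simp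
  have b: "inv g (gpow g (i+1) p + gpow g (i+1) q + D p q (2*(i+1)) (-(i+1)))
        = gpow g i p + gpow g i q + D p q (2*i) (-i)"
    using STEP[of "i+1" p q] by simp
  have "inv g (gpow g (i+1) (p+q)) = inv g (gpow g (i+1) p + gpow g (i+1) q + D p q (2*(i+1)) (-(i+1)))"
    unfolding a b by (rule step1)
  then show ?case by (rule inj_ig)
next
  case (step2 i)
  have a: "gpow g (i-1) x = inv g (gpow g i x)" for x by (rule gpow_pred[OF bij])
  have "gpow g (i-1) (p+q) = inv g (gpow g i (p+q))" by (rule a)
  also have "\<dots> = inv g (gpow g i p + gpow g i q + D p q (2*i) (-i))" by (simp only: step2)
  also have "\<dots> = gpow g (i-1) p + gpow g (i-1) q + D p q (2*(i-1)) (-(i-1))" by (rule STEP)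
  finally show ?case .
qed


lemma Rad_neg: "inRad r \<Longrightarrow> inRad (- r)"
  unfolding inRad_def by (metis add.left_inverse addL add_0_right g0L)

definition mult2 where "mult2 i x j y = gpow g (-j) x + y + D x y (i+j) (-j)"

end

locale cpn = cp +
  fixes n :: nat
  assumes hyp: "n > 0 \<Longrightarrow> perm_order g dvd n \<and> rpar g \<gamma> dvd n"
begin

lemma funpow_idc: "(id ^^ c) = id" by (induct c) simp_all

lemma gn: assumes n: "n > 0" shows "g ^^ n = id"
proof -
  from hyp[OF n] have d: "perm_order g dvd n" by simp
  have ex: "\<exists>m. m > 0 \<and> g ^^ m = id"
  proof (rule ccontr)
    assume "\<not> ?thesis"
    then have "\<not> (\<exists>m>0. g ^^ m = id)" by blast
    then have "perm_order g = 0" unfolding perm_order_def by (rule if_not_P)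
    with d n show False by simp
  qed
  then have "perm_order g > 0 \<and> g ^^ perm_order g = id"
    unfolding perm_order_def using LeastI_ex[OF ex] ex by auto
  moreover obtain c where "n = perm_order g * c" using d by auto
  ultimately show ?thesis by (simp add: funpow_mult[symmetric] funpow_idc)
qed

lemma rn: assumes n: "n > 0" shows "inRad (\<Sum>k<n. (g ^^ k) w)"
proof -
  from hyp[OF n] have d: "rpar g \<gamma> dvd n" by simp
  let ?P = "\<lambda>r. r > 0 \<and> (\<forall>x. (\<Sum>k<r. (g ^^ k) x) \<in> Rad \<gamma>)"
  have ex: "\<exists>r. ?P r"
  proof (rule ccontr)
    assume "\<not> ?thesis"
    then have "\<not> (\<exists>r>0. \<forall>x. (\<Sum>k<r. (g ^^ k) x) \<in> Rad \<gamma>)" by blast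
    then have "rpar g \<gamma> = 0" unfolding rpar_def by (rule if_not_P)
    with d n show False by simp
  qed
  then have P: "?P (rpar g \<gamma>)"
    unfolding rpar_def using LeastI_ex[OF ex] ex by auto
  obtain c where c: "n = c * rpar g \<gamma>" using d by (metis dvd_def mult.commute)
  let ?r = "rpar g \<gamma>"
  have "(\<Sum>k<n. (g ^^ k) w) = (\<Sum>m<c. \<Sum>k\<in>{m * ?r..<m * ?r + ?r}. (g ^^ k) w)"
    unfolding c by (rule sum.nat_group[symmetric])
  also have "\<dots> = (\<Sum>m<c. \<Sum>k<?r. (g ^^ k) ((g ^^ (m * ?r)) w))"
  proof (rule sum.cong[OF refl])
    fix m
    have "(\<Sum>k\<in>{m * ?r..<m * ?r + ?r}. (g ^^ k) w) = (\<Sum>k\<in>{0 + m * ?r..<?r + m * ?r}. (g ^^ k) w)"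
      by (simp add: add.commute)
    also have "\<dots> = (\<Sum>k\<in>{0..<?r}. (g ^^ (k + m * ?r)) w)"
      by (subst sum.shift_bounds_nat_ivl) simp
    also have "\<dots> = (\<Sum>k<?r. (g ^^ k) ((g ^^ (m * ?r)) w))"
      by (simp add: funpow_add atLeast0LessThan)
    finally show "(\<Sum>k\<in>{m * ?r..<m * ?r + ?r}. (g ^^ k) w) = (\<Sum>k<?r. (g ^^ k) ((g ^^ (m * ?r)) w))" .
  qed
  finally show ?thesis
    using P by (simp add: Rad_def inRad_def[symmetric]) (rule Rad_sum, simp)
qed

lemma gper0: "gpow g (int n * c) x = x"
proof (cases "n = 0")
  case True then show ?thesis by simp
next
  case False
  then have gx: "gpow g (int n) y = y" for y using gn by (simp add: gpow_nat)
  show ?thesis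
  proof (induction c arbitrary: x rule: int_induct[where k=0])
    case base then show ?case by simp
  next
    case (step1 i) then show ?case
      using gpow_add[OF bij, of "int n * i" "int n" x] gx by (simp add: distrib_left)
  next
    case (step2 i) then show ?case
      using gpow_add[OF bij, of "int n * (i - 1)" "int n" x] gx step2(2)[of "gpow g (int n * (i - 1)) x"]
      by (simp add: right_diff_distrib)
  qed
qed

lemma gper: "gpow g (t + int n * c) x = gpow g t x"
  using gpow_add[OF bij, of t "int n * c" x] gper0 by simp

lemma Dfull_aux: "D p q a (a + int m) = \<gamma> (\<Sum>k<m. (g ^^ k) (gpow g a p)) q"
proof (induction m)
  case 0 then show ?case by simp
next
  case (Suc m)
  have e: "a + int (Suc m) = a + int m + 1" by simp
  have s1: "D p q a (a + int m + 1) = D p q a (a + int m) + D p q (a + int m) (a + int m + 1)"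
    by (rule D_split) auto
  have s2: "D p q (a + int m) (a + int m + 1) = \<gamma> ((g ^^ m) (gpow g a p)) q"
    unfolding D_def Iset_single using gpow_add[OF bij, of "int m" a p] by (simp add: add.commute gpow_nat)
  show ?case unfolding e s1 s2 Suc.IH by (simp add: addL)
qed

lemma Dfull: "D p q a (a + int n) = 0"
proof (cases "n = 0")
  case True then show ?thesis by simp
next
  case False then show ?thesis using Dfull_aux[of p q a n] rn[of "gpow g a p"] by (simp add: RadD)
qed

lemma Dper1: "D p q (a + int n * c) b = D p q a b"
proof (induction c rule: int_induct[where k=0])
  case base then show ?case by simp
next
  case (step1 i)
  have "D p q (a + int n * (i+1)) b = D p q (a + int n * i + int n) (a + int n * i) + D p q (a + int n * i) b"
    using D_cocycle[of p q "a + int n * i + int n" "a + int n * i" b] by (simp add: algebra_simps)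
  then show ?case using step1 Dfull[of p q "a + int n * i"] D_sym by simp
next
  case (step2 i)
  have "D p q (a + int n * (i-1)) b = D p q (a + int n * (i - 1)) (a + int n * (i-1) + int n) + D p q (a + int n * i) b"
    using D_cocycle[of p q "a + int n * (i-1)" "a + int n * i" b] by (simp add: algebra_simps)
  then show ?case using step2 Dfull[of p q "a + int n * (i-1)"] by simp
qed

lemma Dper2: "D p q a (b + int n * c) = D p q a b"
  using Dper1 D_sym by metis

lemma mult_red: "sd_mult n g \<gamma> (i mod int n, x) (j mod int n, y) = ((i+j) mod int n, mult2 i x j y)"
proof -
  have jm: "j mod int n = j + int n * (- (j div int n))"
    using minus_mult_div_eq_mod[of j "int n"] by simp
  have im: "i mod int n = i + int n * (- (i div int n))"
    using minus_mult_div_eq_mod[of i "int n"] by simp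
  have a: "gpow g (- (j mod int n)) x = gpow g (-j) x"
    unfolding jm using gper[of "-j" "j div int n" x] by simp
  have b: "D x y (i mod int n + j mod int n) (- (j mod int n)) = D x y (i+j) (-j)"
  proof -
    have "D x y (i mod int n + j mod int n) (- (j mod int n))
       = D x y ((i+j) + int n * (- (i div int n) - (j div int n))) (-j + int n * (j div int n))"
      unfolding im jm by (simp add: algebra_simps)
    then show ?thesis by (simp only: Dper1 Dper2)
  qed
  show ?thesis unfolding sd_mult_def Sig_D by (simp add: a b mod_add_eq mult2_def)
qed


lemma key:
  fixes i j k :: int and x y z :: 'a
  defines "P \<equiv> mult2 j y k z"
  defines "Qv \<equiv> mult2 i x j y"
  shows "mult2 i x (j+k) P + (D x y (i+j) (i+j+k) + D x z (i+k) (i+j+k) + D y z (j+k) (i+j+k))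
       = mult2 (i+j) Qv k z"
proof -
  have P: "P = gpow g (-k) y + z + D y z (j+k) (-k)" unfolding P_def mult2_def ..
  have Q: "Qv = gpow g (-j) x + y + D x y (i+j) (-j)" unfolding Qv_def mult2_def ..
  have DxP: "D x P a b = D x y (a + -k) (b + -k) + D x z a b" for a b
    unfolding P D_addR D_shiftR D_RadR[OF D_Rad] by simp
  have gQ: "gpow g (-k) Qv = gpow g (-k + -j) x + gpow g (-k) y + D (gpow g (-j) x) y (2*(-k)) (-(-k))
       + D x y (i+j - -k) (-j - -k)"
  proof -
    have g1: "gpow g (-k) (gpow g (-j) x + y) = gpow g (-k) (gpow g (-j) x) + gpow g (-k) y
        + D (gpow g (-j) x) y (2*(-k)) (-(-k))" by (rule NA)
    have g2: "gpow g (-k) (gpow g (-j) x) = gpow g (-k + -j) x" by (rule gpow_add[OF bij, symmetric])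
    have g3: "gpow g (-k) (D x y (i+j) (-j)) = D x y (i+j - -k) (-j - -k)" by (rule gpow_D)
    show ?thesis unfolding Q gpow_addR[OF D_Rad] g1 g2 g3 ..
  qed
  have DQz: "D Qv z a b = D x z (a + -j) (b + -j) + D y z a b" for a b
    unfolding Q D_addL D_shiftL D_RadL[OF D_Rad] by simp
  have L: "mult2 i x (j+k) P = gpow g (-(j+k)) x + P + D x P (i+(j+k)) (-(j+k))"
    unfolding mult2_def ..
  have R: "mult2 (i+j) Qv k z = gpow g (-k) Qv + z + D Qv z (i+j+k) (-k)"
    unfolding mult2_def ..
  have ee: "gpow g (-k + -j) x = gpow g (-(j+k)) x" by (simp add: add.commute)
  show ?thesis unfolding L R DxP DQz gQ D_shiftL ee unfolding P
    by (simp add: D_G algebra_simps)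
qed


lemma main:
  "sd_assoc n g \<gamma> (sd_elem n i x) (sd_elem n j y) (sd_elem n k z)
     = sd_elem n 0 (D x y (i+j) (i+j+k) + D x z (i+k) (i+j+k) + D y z (j+k) (i+j+k))"
proof -
  define S where "S = D x y (i+j) (i+j+k) + D x z (i+k) (i+j+k) + D y z (j+k) (i+j+k)"
  define P where "P = mult2 j y k z"
  define Qv where "Qv = mult2 i x j y"
  define L where "L = mult2 i x (j+k) P"
  define R where "R = mult2 (i+j) Qv k z"
  have SR: "inRad S" unfolding S_def by (intro Rad_add D_Rad)
  have LS: "L + S = R" unfolding L_def R_def S_def P_def Qv_def by (rule key)
  have lhs: "sd_mult n g \<gamma> (sd_elem n i x) (sd_mult n g \<gamma> (sd_elem n j y) (sd_elem n k z))
      = ((i+(j+k)) mod int n, L)"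
    unfolding sd_elem_def mult_red P_def[symmetric] mult_red L_def ..
  have rhs: "sd_mult n g \<gamma> (sd_mult n g \<gamma> (sd_elem n i x) (sd_elem n j y)) (sd_elem n k z)
      = ((i+j+k) mod int n, R)"
    unfolding sd_elem_def mult_red Qv_def[symmetric] mult_red R_def ..
  have ijk: "i+(j+k) = i+j+k" by simp
  let ?l = "i+j+k"
  have e0: "sd_elem n 0 S = (0, S)" by (simp add: sd_elem_def)
  show ?thesis
    unfolding S_def[symmetric] sd_assoc_def lhs rhs ijk e0
  proof (rule the_equality)
    have "sd_mult n g \<gamma> (?l mod int n, L) (0 mod int n, S) = ((?l + 0) mod int n, mult2 ?l L 0 S)"
      by (rule mult_red)
    also have "mult2 ?l L 0 S = R" unfolding mult2_def using LS D_RadR[OF SR] by simp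
    finally show "(0, S) \<in> sd_carrier n \<and> sd_mult n g \<gamma> (?l mod int n, L) (0, S) = (?l mod int n, R)"
      by (simp add: sd_carrier_def)
  next
    fix a assume a: "a \<in> sd_carrier n \<and> sd_mult n g \<gamma> (?l mod int n, L) a = (?l mod int n, R)"
    obtain m w where aw: "a = (m, w)" by (cases a)
    have mm: "m mod int n = m" using a aw by (simp add: sd_carrier_def)
    have "sd_mult n g \<gamma> (?l mod int n, L) (m mod int n, w) = ((?l + m) mod int n, mult2 ?l L m w)"
      by (rule mult_red)
    then have e1: "(?l + m) mod int n = ?l mod int n" and e2: "mult2 ?l L m w = R"
      using a aw mm by auto
    have "m mod int n = ((?l + m) mod int n - ?l mod int n) mod int n"
      by (simp add: mod_diff_eq)
    then have "m mod int n = 0" unfolding e1 by simp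
    then have m0: "m = 0" using mm by simp
    have "L + (w + D L w ?l 0) = L + S" using e2 LS unfolding m0 mult2_def by (simp add: add.assoc)
    then have ws: "w + D L w ?l 0 = S" by simp
    define d where "d = w - S"
    have "D L w ?l 0 = D L d ?l 0"
      using D_addR[of L S d ?l 0] D_RadR[OF SR] unfolding d_def by simp
    then have "S + d + D L d ?l 0 = S" using ws unfolding d_def by (simp add: algebra_simps)
    then have "d + D L d ?l 0 = 0" by (simp add: add.assoc)
    then have dd: "d = - D L d ?l 0" by (simp add: eq_neg_iff_add_eq_0)
    have "inRad d" using Rad_neg[OF D_Rad] dd by metis
    then have "D L d ?l 0 = 0" by (rule D_RadR)
    then have "d = 0" using dd by simp
    then show "a = (0, S)" using aw m0 unfolding d_def by simp
  qed
qed

end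

theorem mainTheorem5:
  fixes g :: "'a::ab_group_add \<Rightarrow> 'a" and \<gamma> :: "'a \<Rightarrow> 'a \<Rightarrow> 'a" and n :: nat
  assumes "construction_pair g \<gamma>"
    and "n > 0 \<Longrightarrow> perm_order g dvd n \<and> rpar g \<gamma> dvd n"
  shows "sd_assoc n g \<gamma> (sd_elem n i x) (sd_elem n j y) (sd_elem n k z)
       = sd_elem n 0 (Sig g \<gamma> (Iset (i + j) (i + j + k)) x y
                    + Sig g \<gamma> (Iset (i + k) (i + j + k)) x z
                    + Sig g \<gamma> (Iset (j + k) (i + j + k)) y z)"
proof -
  interpret cpn g \<gamma> n using assms by (unfold_locales) auto
  show ?thesis unfolding Sig_D by (rule main)
qed

end
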